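(* For every integer $R\ge 2$, the $R$-counterwall $G_R$ has no $K_6$ minor.
   Context: Let $W_e$ be the elementary wall of height $R$: from the graph with vertex set $\{1,\dots,2R\}\times\{1,\dots,R\}$, with edges $(i,j)(i+1,j)$ for $1\le i<2R$ and $(i,j)(i,j+1)$ for $1\le j<R$ with $i+j$ even, delete the vertices of degree $1$; draw it in the plane with first coordinate increasing to the right and second coordinate increasing upward. Its bricks are the facial $6$-cycles; each brick consists of a bottom path $x_1x_2x_3$ (left to right, in the lower row), a top path $y_1y_2y_3$ (left to right, in the upper row), and the vertical edges $x_1y_1$, $x_3y_3$. The $R$-counterwall $G_R$ is obtained from $W_e$ by doing the following for every brick $B$ (with $\omega_B=y_3$ its top right corner): subdivide the edge $x_2x_3$ by four new vertices $\alpha_B,\beta_B,\gamma_B,\delta_B$ appearing in this order from $x_2$ to $x_3$, and add the six edges $\omega_B\alpha_B$, $\omega_B\beta_B$, $\omega_B\gamma_B$, $\omega_B\delta_B$, $\alpha_B\gamma_B$, $\beta_B\delta_B$. (Each horizontal edge is the bottom edge of at most one brick, so this is well defined.) Each brick together with its four new vertices and six new edges is called a full brick. *)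

theory Defs
  imports Main
begin

definition connected_set :: "('a \<Rightarrow> 'a \<Rightarrow> bool) \<Rightarrow> 'a set \<Rightarrow> bool" where
  "connected_set E S \<longleftrightarrow> S \<noteq> {} \<and>
     (\<forall>x\<in>S. \<forall>y\<in>S. (\<lambda>a b. a \<in> S \<and> b \<in> S \<and> E a b)\<^sup>*\<^sup>* x y)"

definition is_minor ::
  "'b set \<Rightarrow> ('b \<Rightarrow> 'b \<Rightarrow> bool) \<Rightarrow> 'a set \<Rightarrow> ('a \<Rightarrow> 'a \<Rightarrow> bool) \<Rightarrow> bool" where
  "is_minor VH EH VG EG \<longleftrightarrow> (\<exists>\<phi> :: 'b \<Rightarrow> 'a set.
     (\<forall>x\<in>VH. \<phi> x \<subseteq> VG \<and> connected_set EG (\<phi> x)) \<and>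
     (\<forall>x\<in>VH. \<forall>y\<in>VH. x \<noteq> y \<longrightarrow> \<phi> x \<inter> \<phi> y = {}) \<and>
     (\<forall>x\<in>VH. \<forall>y\<in>VH. EH x y \<longrightarrow> (\<exists>a\<in>\<phi> x. \<exists>b\<in>\<phi> y. EG a b)))"

definition K_verts :: "nat \<Rightarrow> nat set" where "K_verts n = {0..<n}"
definition K_edge :: "nat \<Rightarrow> nat \<Rightarrow> bool" where "K_edge x y \<longleftrightarrow> x \<noteq> y"

definition grid_vert :: "nat \<Rightarrow> nat \<times> nat \<Rightarrow> bool" where
  "grid_vert R p \<longleftrightarrow> 1 \<le> fst p \<and> fst p \<le> 2 * R \<and> 1 \<le> snd p \<and> snd p \<le> R"

definition grid_edge :: "nat \<Rightarrow> nat \<times> nat \<Rightarrow> nat \<times> nat \<Rightarrow> bool" where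
  "grid_edge R p q \<longleftrightarrow> grid_vert R p \<and> grid_vert R q \<and>
     ((snd p = snd q \<and> (fst q = fst p + 1 \<or> fst p = fst q + 1)) \<or>
      (fst p = fst q \<and> even (fst p + min (snd p) (snd q)) \<and>
        (snd q = snd p + 1 \<or> snd p = snd q + 1)))"

definition wall_vert :: "nat \<Rightarrow> nat \<times> nat \<Rightarrow> bool" where
  "wall_vert R p \<longleftrightarrow> grid_vert R p \<and> card {q. grid_edge R p q} \<noteq> 1"

definition wall_edge :: "nat \<Rightarrow> nat \<times> nat \<Rightarrow> nat \<times> nat \<Rightarrow> bool" where
  "wall_edge R p q \<longleftrightarrow> wall_vert R p \<and> wall_vert R q \<and> grid_edge R p q"

text \<open>Bricks, indexed by their bottom-left corner x1 = (i,j): bottom path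
  (i,j)(i+1,j)(i+2,j), top path (i,j+1)(i+1,j+1)(i+2,j+1), vertical edges
  at columns i and i+2 (which requires i+j even).\<close>

definition is_brick :: "nat \<Rightarrow> nat \<times> nat \<Rightarrow> bool" where
  "is_brick R b \<longleftrightarrow> 1 \<le> fst b \<and> fst b + 2 \<le> 2 * R \<and> 1 \<le> snd b \<and> snd b < R
     \<and> even (fst b + snd b)"

definition brick_x2 :: "nat \<times> nat \<Rightarrow> nat \<times> nat" where
  "brick_x2 b = (fst b + 1, snd b)"
definition brick_x3 :: "nat \<times> nat \<Rightarrow> nat \<times> nat" where
  "brick_x3 b = (fst b + 2, snd b)"
definition brick_omega :: "nat \<times> nat \<Rightarrow> nat \<times> nat" where
  "brick_omega b = (fst b + 2, snd b + 1)"

text \<open>Vertices: wall vertices, and for each brick b the new vertices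
  NewV b 0, NewV b 1, NewV b 2, NewV b 3 standing for alpha_b, beta_b,
  gamma_b, delta_b.\<close>

datatype cw_vertex = WallV "nat \<times> nat" | NewV "nat \<times> nat" nat

definition cw_vert :: "nat \<Rightarrow> cw_vertex set" where
  "cw_vert R = {WallV p | p. wall_vert R p} \<union> {NewV b k | b k. is_brick R b \<and> k < 4}"

definition cw_edge0 :: "nat \<Rightarrow> cw_vertex \<Rightarrow> cw_vertex \<Rightarrow> bool" where
  "cw_edge0 R u v \<longleftrightarrow>
     (\<exists>p q. u = WallV p \<and> v = WallV q \<and> wall_edge R p q \<and>
        \<not> (\<exists>b. is_brick R b \<and> {p, q} = {brick_x2 b, brick_x3 b})) \<or>
     (\<exists>b. is_brick R b \<and>
        ((u = WallV (brick_x2 b) \<and> v = NewV b 0) \<or>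
         (\<exists>k<3. u = NewV b k \<and> v = NewV b (k + 1)) \<or>
         (u = NewV b 3 \<and> v = WallV (brick_x3 b)) \<or>
         (\<exists>k<4. u = WallV (brick_omega b) \<and> v = NewV b k) \<or>
         (u = NewV b 0 \<and> v = NewV b 2) \<or>
         (u = NewV b 1 \<and> v = NewV b 3)))"

definition cw_edge :: "nat \<Rightarrow> cw_vertex \<Rightarrow> cw_vertex \<Rightarrow> bool" where
  "cw_edge R u v \<longleftrightarrow> cw_edge0 R u v \<or> cw_edge0 R v u"

end

theory Submission
  imports Defs
begin


definition dg :: "('e \<Rightarrow> 'v set) \<Rightarrow> 'e set \<Rightarrow> 'v \<Rightarrow> nat" where
  "dg ends Z v = card {e\<in>Z. v \<in> ends e}"

lemma card_filter_sum: "finite A \<Longrightarrow> card {a\<in>A. P a} = (\<Sum>a\<in>A. if P a then 1 else 0)"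
  by (simp add: sum.If_cases Int_def)

lemma swap_count:
  assumes "finite A" "finite B"
  shows "(\<Sum>a\<in>A. card {b\<in>B. R a b}) = (\<Sum>b\<in>B. card {a\<in>A. R a b})"
proof -
  have "(\<Sum>a\<in>A. card {b\<in>B. R a b}) = (\<Sum>a\<in>A. \<Sum>b\<in>B. if R a b then 1 else 0)"
    using assms by (simp add: card_filter_sum)
  also have "\<dots> = (\<Sum>b\<in>B. \<Sum>a\<in>A. if R a b then 1 else 0)" by (rule sum.swap)
  also have "\<dots> = (\<Sum>b\<in>B. card {a\<in>A. R a b})"
    using assms by (simp add: card_filter_sum)
  finally show ?thesis .
qed

lemma evsum_iff: "finite S \<Longrightarrow> even (\<Sum>s\<in>S. (g s::nat)) \<longleftrightarrow> even (card {s\<in>S. odd (g s)})"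
proof (induction S rule: finite_induct)
  case empty then show ?case by simp
next
  case (insert x F)
  have "{s \<in> insert x F. odd (g s)} = (if odd (g x) then insert x {s\<in>F. odd (g s)} else {s\<in>F. odd (g s)})"
    by auto
  then show ?case using insert by auto
qed

lemma dg_symdiff:
  assumes "finite A" "finite B"
  shows "even (dg ends ((A - B) \<union> (B - A)) v) \<longleftrightarrow> (even (dg ends A v) \<longleftrightarrow> even (dg ends B v))"
proof -
  define SA where "SA = {e\<in>A. v \<in> ends e}"
  define SB where "SB = {e\<in>B. v \<in> ends e}"
  have fA: "finite SA" "finite SB" using assms by (auto simp: SA_def SB_def)
  have eq: "{e\<in>(A - B) \<union> (B - A). v \<in> ends e} = (SA - SB) \<union> (SB - SA)"
    by (auto simp: SA_def SB_def)
  have c1: "card ((SA - SB) \<union> (SB - SA)) = card (SA - SB) + card (SB - SA)"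
    using fA by (intro card_Un_disjoint) auto
  have c2: "card (SA - SB) + card (SA \<inter> SB) = card SA"
  proof -
    have "SA = (SA - SB) \<union> (SA \<inter> SB)" by auto
    then have "card SA = card ((SA - SB) \<union> (SA \<inter> SB))" by simp
    also have "\<dots> = card (SA - SB) + card (SA \<inter> SB)" using fA by (intro card_Un_disjoint) auto
    finally show ?thesis by simp
  qed
  have c3: "card (SB - SA) + card (SA \<inter> SB) = card SB"
  proof -
    have "SB = (SB - SA) \<union> (SA \<inter> SB)" by auto
    then have "card SB = card ((SB - SA) \<union> (SA \<inter> SB))" by simp
    also have "\<dots> = card (SB - SA) + card (SA \<inter> SB)" using fA by (intro card_Un_disjoint) auto
    finally show ?thesis by simp
  qed
  have "card SA + card SB = (card (SA - SB) + card (SB - SA)) + 2 * card (SA \<inter> SB)"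
    using c2 c3 by simp
  then show ?thesis unfolding dg_def eq SA_def[symmetric] SB_def[symmetric] c1
    by (metis even_add even_mult_iff even_numeral)
qed




datatype ge = gH nat nat | gV nat nat | gD nat nat
datatype fc = Out | Lo nat nat | Up nat nat

fun gends :: "ge \<Rightarrow> (nat \<times> nat) set" where
  "gends (gH x y) = {(x,y),(Suc x,y)}"
| "gends (gV x y) = {(x,y),(x,Suc y)}"
| "gends (gD x y) = {(x,y),(Suc x,Suc y)}"

fun gvalid :: "nat \<Rightarrow> nat \<Rightarrow> ge \<Rightarrow> bool" where
  "gvalid n m (gH x y) = (1 \<le> x \<and> x < n \<and> 1 \<le> y \<and> y \<le> m)"
| "gvalid n m (gV x y) = (1 \<le> x \<and> x \<le> n \<and> 1 \<le> y \<and> y < m)"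
| "gvalid n m (gD x y) = (1 \<le> x \<and> x < n \<and> 1 \<le> y \<and> y < m)"

definition GE :: "nat \<Rightarrow> nat \<Rightarrow> ge set" where "GE n m = {e. gvalid n m e}"

definition sq :: "nat \<Rightarrow> nat \<Rightarrow> nat \<Rightarrow> nat \<Rightarrow> bool" where
  "sq n m x y = (1 \<le> x \<and> x < n \<and> 1 \<le> y \<and> y < m)"
definition mkLo :: "nat \<Rightarrow> nat \<Rightarrow> nat \<Rightarrow> nat \<Rightarrow> fc" where
  "mkLo n m x y = (if sq n m x y then Lo x y else Out)"
definition mkUp :: "nat \<Rightarrow> nat \<Rightarrow> nat \<Rightarrow> nat \<Rightarrow> fc" where
  "mkUp n m x y = (if sq n m x y then Up x y else Out)"

fun gs1 :: "nat \<Rightarrow> nat \<Rightarrow> ge \<Rightarrow> fc" where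
  "gs1 n m (gH x y) = mkUp n m x (y - 1)"
| "gs1 n m (gV x y) = mkLo n m (x - 1) y"
| "gs1 n m (gD x y) = mkLo n m x y"

fun gs2 :: "nat \<Rightarrow> nat \<Rightarrow> ge \<Rightarrow> fc" where
  "gs2 n m (gH x y) = mkLo n m x y"
| "gs2 n m (gV x y) = mkUp n m x y"
| "gs2 n m (gD x y) = mkUp n m x y"

definition FF :: "nat \<Rightarrow> nat \<Rightarrow> fc set" where
  "FF n m = {Out} \<union> {Lo x y |x y. sq n m x y} \<union> {Up x y |x y. sq n m x y}"

definition bdg :: "nat \<Rightarrow> nat \<Rightarrow> fc set \<Rightarrow> ge set" where
  "bdg n m I = {e \<in> GE n m. (gs1 n m e \<in> I) \<noteq> (gs2 n m e \<in> I)}"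

lemma finite_GE: "finite (GE n m)"
proof -
  have "GE n m \<subseteq> (\<lambda>(x,y). gH x y) ` ({..n}\<times>{..m}) \<union> (\<lambda>(x,y). gV x y) ` ({..n}\<times>{..m})
      \<union> (\<lambda>(x,y). gD x y) ` ({..n}\<times>{..m})"
  proof
    fix e assume "e \<in> GE n m"
    then show "e \<in> (\<lambda>(x,y). gH x y) ` ({..n}\<times>{..m}) \<union> (\<lambda>(x,y). gV x y) ` ({..n}\<times>{..m})
      \<union> (\<lambda>(x,y). gD x y) ` ({..n}\<times>{..m})"
      by (cases e) (auto simp: GE_def image_iff)
  qed
  then show ?thesis by (rule finite_subset) auto
qed

lemma finite_FF: "finite (FF n m)"
proof -
  have "FF n m \<subseteq> {Out} \<union> (\<lambda>(x,y). Lo x y) ` ({..n}\<times>{..m}) \<union> (\<lambda>(x,y). Up x y) ` ({..n}\<times>{..m})"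
    by (auto simp: FF_def sq_def image_iff)
  then show ?thesis by (rule finite_subset) auto
qed

lemma mk_in_FF: "mkLo n m x y \<in> FF n m" "mkUp n m x y \<in> FF n m"
  by (auto simp: mkLo_def mkUp_def FF_def)

lemma s_in_FF: "gs1 n m e \<in> FF n m" "gs2 n m e \<in> FF n m"
  by (cases e; simp add: mk_in_FF)+

lemma invalid_same: "\<not> gvalid n m e \<Longrightarrow> gs1 n m e = gs2 n m e"
  by (cases e) (auto simp: mkLo_def mkUp_def sq_def)

lemma bdg_alt: "bdg n m I = {e. (gs1 n m e \<in> I) \<noteq> (gs2 n m e \<in> I)}"
  unfolding bdg_def GE_def using invalid_same by fastforce

lemma valid_ends: "gvalid n m e \<Longrightarrow> (x,y) \<in> gends e \<Longrightarrow> 1 \<le> x \<and> 1 \<le> y"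
  by (cases e) auto

lemma incid6:
  assumes "1 \<le> x" "1 \<le> y"
  shows "{e. (x,y) \<in> gends e} = {gH x y, gH (x-1) y, gV x y, gV x (y-1), gD x y, gD (x-1) (y-1)}"
proof (rule set_eqI)
  fix e show "(e \<in> {e. (x,y) \<in> gends e}) = (e \<in> {gH x y, gH (x-1) y, gV x y, gV x (y-1), gD x y, gD (x-1) (y-1)})"
    using assms by (cases e) auto
qed

lemma card6:
  assumes "1 \<le> x" "1 \<le> y" "finite Z"
  shows "card {e\<in>Z. (x,y) \<in> gends e} =
    (\<Sum>e\<in>{gH x y, gH (x-1) y, gV x y, gV x (y-1), gD x y, gD (x-1) (y-1)}. if e \<in> Z then 1 else 0)"
proof -
  have "{e\<in>Z. (x,y) \<in> gends e} = {e\<in>{gH x y, gH (x-1) y, gV x y, gV x (y-1), gD x y, gD (x-1) (y-1)}. e \<in> Z}"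
    using incid6[OF assms(1,2)] by blast
  then show ?thesis by (simp only: card_filter_sum[OF finite.insertI[OF finite.insertI[OF finite.insertI[OF finite.insertI[OF finite.insertI[OF finite.insertI[OF finite.emptyI]]]]]]])
qed

lemma sum6:
  assumes "1 \<le> x" "1 \<le> y"
  shows "(\<Sum>e\<in>{gH x y, gH (x-1) y, gV x y, gV x (y-1), gD x y, gD (x-1) (y-1)}. (f e::nat)) =
    f (gH x y) + f (gH (x-1) y) + f (gV x y) + f (gV x (y-1)) + f (gD x y) + f (gD (x-1) (y-1))"
  using assms by (simp add: add.assoc)


lemma bd_even: "even (card {e \<in> bdg n m I. v \<in> gends e})"
proof (cases v)
  case (Pair x y)
  show ?thesis
  proof (cases "1 \<le> x \<and> 1 \<le> y")
    case False
    have "{e \<in> bdg n m I. v \<in> gends e} = {}"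
      using False valid_ends[of n m _ x y] by (auto simp: Pair bdg_def GE_def)
    then show ?thesis by (metis card.empty even_zero)
  next
    case True
    have fin: "finite (bdg n m I)" using finite_GE by (simp add: bdg_def)
    have "card {e \<in> bdg n m I. v \<in> gends e} =
       (\<Sum>e\<in>{gH x y, gH (x-1) y, gV x y, gV x (y-1), gD x y, gD (x-1) (y-1)}. if e \<in> bdg n m I then 1 else 0)"
      using card6[OF _ _ fin, of x y] True Pair by simp
    also have "\<dots> = (if (mkUp n m x (y-1) \<in> I) \<noteq> (mkLo n m x y \<in> I) then 1 else 0)
       + (if (mkUp n m (x-1) (y-1) \<in> I) \<noteq> (mkLo n m (x-1) y \<in> I) then 1 else 0)
       + (if (mkLo n m (x-1) y \<in> I) \<noteq> (mkUp n m x y \<in> I) then 1 else 0)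
       + (if (mkLo n m (x-1) (y-1) \<in> I) \<noteq> (mkUp n m x (y-1) \<in> I) then 1 else 0)
       + (if (mkLo n m x y \<in> I) \<noteq> (mkUp n m x y \<in> I) then 1 else 0)
       + (if (mkLo n m (x-1) (y-1) \<in> I) \<noteq> (mkUp n m (x-1) (y-1) \<in> I) then 1 else 0)"
      using True by (simp only: sum6 bdg_alt mem_Collect_eq gs1.simps gs2.simps)
    finally show ?thesis
      by (cases "mkUp n m x (y-1) \<in> I"; cases "mkLo n m x y \<in> I"; cases "mkUp n m x y \<in> I";
          cases "mkLo n m (x-1) y \<in> I"; cases "mkUp n m (x-1) (y-1) \<in> I"; cases "mkLo n m (x-1) (y-1) \<in> I"; simp)
  qed
qed

lemma gen_grid:
  assumes Z: "Z \<subseteq> GE n m" and ev: "\<forall>v. even (card {e\<in>Z. v \<in> gends e})"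
  shows "\<exists>I\<subseteq>FF n m. bdg n m I = Z"
proof -
  have finZ: "finite Z" using Z finite_GE finite_subset by blast
  define ind where "ind e = (if e \<in> Z then 1 else 0::nat)" for e
  have ind0: "\<not> gvalid n m e \<Longrightarrow> ind e = 0" for e using Z by (auto simp: ind_def GE_def)
  define P where "P x y = (\<Sum>y'\<le>y. ind (gH x y')) + (\<Sum>y'<y. ind (gD x y'))" for x y
  define Q where "Q x y = P x y + ind (gD x y)" for x y
  have PSuc: "P x (Suc y) = Q x y + ind (gH x (Suc y))" for x y
    by (simp add: P_def Q_def)
  have P0y: "P 0 y = 0" for y by (simp add: P_def ind0)
  have Px0: "P x 0 = 0" for x by (simp add: P_def ind0)
  have Qn: "Q n y = 0" for y by (simp add: P_def Q_def ind0)
  have deg: "even (ind (gH x y) + ind (gH (x-1) y) + ind (gV x y) + ind (gV x (y-1)) + ind (gD x y) + ind (gD (x-1) (y-1)))"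
    if "1 \<le> x" "1 \<le> y" for x y
  proof -
    have "card {e\<in>Z. (x,y) \<in> gends e} = ind (gH x y) + ind (gH (x-1) y) + ind (gV x y) + ind (gV x (y-1)) + ind (gD x y) + ind (gD (x-1) (y-1))"
      using card6[OF that finZ] sum6[OF that, of ind] by (simp add: ind_def)
    then show ?thesis using ev by metis
  qed
  have Deven: "even (Q x y + P (x-1) y + ind (gV x y))" if "1 \<le> x" for x y
  proof (induction y)
    case 0 then show ?case by (simp add: Q_def Px0 ind0)
  next
    case (Suc y)
    have "Q x (Suc y) + P (x-1) (Suc y) + ind (gV x (Suc y)) + 2 * ind (gV x y) =
      (Q x y + P (x-1) y + ind (gV x y)) +
      (ind (gH x (Suc y)) + ind (gH (x-1) (Suc y)) + ind (gV x (Suc y)) + ind (gV x (Suc y - 1)) + ind (gD x (Suc y)) + ind (gD (x-1) (Suc y - 1)))"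
      by (simp add: Q_def P_def)
    moreover have "even (ind (gH x (Suc y)) + ind (gH (x-1) (Suc y)) + ind (gV x (Suc y)) + ind (gV x (Suc y - 1)) + ind (gD x (Suc y)) + ind (gD (x-1) (Suc y - 1)))"
      using deg[of x "Suc y"] that by simp
    ultimately show ?case using Suc.IH by presburger
  qed
  have Pm: "even (P x m)" for x
  proof (induction x)
    case 0 then show ?case by (simp add: P0y)
  next
    case (Suc x)
    have "even (Q (Suc x) m + P x m + ind (gV (Suc x) m))" using Deven[of "Suc x" m] by simp
    moreover have "ind (gV (Suc x) m) = 0" "ind (gD (Suc x) m) = 0" by (simp_all add: ind0)
    ultimately show ?case using Suc.IH by (simp add: Q_def)
  qed
  define I where "I = {f\<in>FF n m. case f of Out \<Rightarrow> False | Lo x y \<Rightarrow> odd (P x y) | Up x y \<Rightarrow> odd (Q x y)}"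
  have memLo: "(mkLo n m x y \<in> I) = (sq n m x y \<and> odd (P x y))" for x y
    by (auto simp: mkLo_def I_def FF_def)
  have memUp: "(mkUp n m x y \<in> I) = (sq n m x y \<and> odd (Q x y))" for x y
    by (auto simp: mkUp_def I_def FF_def)
  have "bdg n m I = Z"
  proof (rule set_eqI)
    fix e
    show "(e \<in> bdg n m I) = (e \<in> Z)"
    proof (cases "gvalid n m e")
      case False then show ?thesis using Z by (auto simp: bdg_def GE_def)
    next
      case True
      then have eG: "e \<in> GE n m" by (simp add: GE_def)
      have "(gs1 n m e \<in> I) \<noteq> (gs2 n m e \<in> I) \<longleftrightarrow> ind e = 1"
      proof (cases e)
        case (gD x y)
        then show ?thesis using True by (auto simp: memLo memUp sq_def Q_def ind_def)
      next
        case (gH x y)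
        then obtain y0 where y0: "y = Suc y0" using True by (cases y) auto
        have a: "(mkUp n m x (y-1) \<in> I) = odd (Q x y0)"
        proof (cases "y0 = 0")
          case True then show ?thesis using y0 by (simp add: memUp sq_def Q_def Px0 ind0)
        next
          case False then show ?thesis using \<open>gvalid n m e\<close> gH y0 by (auto simp: memUp sq_def)
        qed
        have b: "(mkLo n m x y \<in> I) = odd (P x y)"
        proof (cases "y = m")
          case True then show ?thesis using Pm memLo by (auto simp: sq_def)
        next
          case False then show ?thesis using \<open>gvalid n m e\<close> gH by (auto simp: memLo sq_def)
        qed
        show ?thesis using a b gH y0 PSuc[of x y0] by (auto simp: ind_def)
      next
        case (gV x y)
        have a: "(mkLo n m (x-1) y \<in> I) = odd (P (x-1) y)"
        proof (cases "x = 1")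
          case True then show ?thesis using P0y memLo by (auto simp: sq_def)
        next
          case False then show ?thesis using \<open>gvalid n m e\<close> gV by (auto simp: memLo sq_def)
        qed
        have b: "(mkUp n m x y \<in> I) = odd (Q x y)"
        proof (cases "x = n")
          case True then show ?thesis using Qn memUp by (auto simp: sq_def)
        next
          case False then show ?thesis using \<open>gvalid n m e\<close> gV by (auto simp: memUp sq_def)
        qed
        have "even (Q x y + P (x-1) y + ind (gV x y))" using Deven[of x y] True gV by simp
        then show ?thesis using a b gV by (auto simp: ind_def split: if_splits)
      qed
      then show ?thesis using eG by (auto simp: bdg_def ind_def split: if_splits)
    qed
  qed
  moreover have "I \<subseteq> FF n m" by (auto simp: I_def)
  ultimately show ?thesis by blast
qed




lemma lt6: "(j::nat) < 6 \<longleftrightarrow> j = 0 \<or> j = 1 \<or> j = 2 \<or> j = 3 \<or> j = 4 \<or> j = 5" by auto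

lemma PP15: "{(i,j). i<j \<and> j<(6::nat)} = {(0,1),(0,2),(1,2),(0,3),(1,3),(2,3),(0,4),(1,4),(2,4),(3,4),(0,5),(1,5),(2,5),(3,5),(4,5)}"
proof (rule set_eqI, clarify)
  fix i j :: nat
  show "((i,j) \<in> {(i,j). i<j \<and> j<(6::nat)}) = ((i,j) \<in> {(0,1),(0,2),(1,2),(0,3),(1,3),(2,3),(0,4),(1,4),(2,4),(3,4),(0,5),(1,5),(2,5),(3,5),(4,5)})"
  proof
    assume "(i,j) \<in> {(i,j). i<j \<and> j<(6::nat)}"
    then have "i < j" "j < 6" by auto
    then have "i < 6" by simp
    then show "(i,j) \<in> {(0,1),(0,2),(1,2),(0,3),(1,3),(2,3),(0,4),(1,4),(2,4),(3,4),(0,5),(1,5),(2,5),(3,5),(4,5)}"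
      using \<open>i<j\<close> \<open>j<6\<close> unfolding lt6 by (elim disjE) simp_all
  qed auto
qed

lemma card_PP: "card {(i,j). i<j \<and> j<(6::nat)} = 15" unfolding PP15 by simp

lemma P510: "{(i,j). 1 \<le> i \<and> i<j \<and> j<(6::nat)} = {(1,2),(1,3),(2,3),(1,4),(2,4),(3,4),(1,5),(2,5),(3,5),(4,5)}"
proof (rule set_eqI, clarify)
  fix i j :: nat
  show "((i,j) \<in> {(i,j). 1 \<le> i \<and> i<j \<and> j<(6::nat)}) = ((i,j) \<in> {(1,2),(1,3),(2,3),(1,4),(2,4),(3,4),(1,5),(2,5),(3,5),(4,5)})"
  proof
    assume "(i,j) \<in> {(i,j). 1 \<le> i \<and> i<j \<and> j<(6::nat)}"
    then have "1 \<le> i" "i < j" "j < 6" by auto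
    then have "i < 6" by simp
    then show "(i,j) \<in> {(1,2),(1,3),(2,3),(1,4),(2,4),(3,4),(1,5),(2,5),(3,5),(4,5)}"
      using \<open>1 \<le> i\<close> \<open>i<j\<close> \<open>j<6\<close> unfolding lt6 by (elim disjE) simp_all
  qed auto
qed

lemma card_P5: "card {(i,j). 1 \<le> i \<and> i<j \<and> j<(6::nat)} = 10" unfolding P510 by simp

definition Keven :: "(nat \<times> nat) set \<Rightarrow> bool" where
  "Keven Y \<longleftrightarrow> (\<forall>i<6. even (card {p\<in>Y. fst p = i \<or> snd p = i}))"

definition PP :: "(nat \<times> nat) set" where "PP = {(i,j). i<j \<and> j<(6::nat)}"

lemma finite_PP: "finite PP" unfolding PP_def PP15 by simp

lemma three:
  assumes Y: "Y \<subseteq> PP" and K: "Keven Y" and p: "p \<in> Y"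
  shows "3 \<le> card Y"
proof -
  obtain a b where pab: "p = (a,b)" by (cases p)
  have ab: "a < b" "b < 6" using p Y pab by (auto simp: PP_def)
  have finY: "finite Y" using Y finite_PP finite_subset by blast
  have other: "\<exists>q\<in>Y. q \<noteq> p \<and> (fst q = i \<or> snd q = i)" if "i<6" "fst p = i \<or> snd p = i" for i
  proof (rule ccontr)
    assume "\<not> ?thesis"
    then have "{q\<in>Y. fst q = i \<or> snd q = i} = {p}" using p that by auto
    then show False using K that unfolding Keven_def by auto
  qed
  obtain q where q: "q \<in> Y" "q \<noteq> p" "fst q = a \<or> snd q = a" using other[of a] ab pab by auto
  obtain r where r: "r \<in> Y" "r \<noteq> p" "fst r = b \<or> snd r = b" using other[of b] ab pab by auto
  have qPP: "fst q < snd q" using q Y by (auto simp: PP_def)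
  have "q \<noteq> r"
  proof
    assume "q = r"
    then have "fst q = a \<and> snd q = b \<or> fst q = b \<and> snd q = a" using q r ab by auto
    then show False using qPP ab q pab by (cases q) auto
  qed
  then have "card {p,q,r} = 3" using q r by auto
  moreover have "card {p,q,r} \<le> card Y" using p q r finY by (intro card_mono) auto
  ultimately show ?thesis by simp
qed

definition P5 :: "(nat \<times> nat) set" where "P5 = {(i,j). 1 \<le> i \<and> i<j \<and> j<(6::nat)}"

definition cnt :: "(nat \<times> nat) set \<Rightarrow> nat \<Rightarrow> nat" where
  "cnt Y i = card {p\<in>Y. fst p = i \<or> snd p = i}"

definition ext5 :: "(nat \<times> nat) set \<Rightarrow> (nat \<times> nat) set" where
  "ext5 Y = Y \<union> (\<lambda>i. (0,i)) ` {i\<in>{1..<6}. odd (cnt Y i)}"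

lemma handshake:
  assumes "Y \<subseteq> P5"
  shows "(\<Sum>i\<in>{1..<6}. cnt Y i) = 2 * card Y"
proof -
  have finY: "finite Y" using assms unfolding P5_def P510 using finite_subset by blast
  have "(\<Sum>i\<in>{1..<6}. cnt Y i) = (\<Sum>p\<in>Y. card {i\<in>{1..<6}. fst p = i \<or> snd p = i})"
    unfolding cnt_def by (rule swap_count) (simp_all add: finY)
  also have "\<dots> = (\<Sum>p\<in>Y. 2)"
  proof (rule sum.cong)
    fix p assume "p \<in> Y"
    then have "1 \<le> fst p" "fst p < snd p" "snd p < 6" using assms by (auto simp: P5_def)
    then have "{i\<in>{1..<6}. fst p = i \<or> snd p = i} = {fst p, snd p}" by auto
    then show "card {i\<in>{1..<6}. fst p = i \<or> snd p = i} = 2" using \<open>fst p < snd p\<close> by simp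
  qed simp
  finally show ?thesis by simp
qed

lemma ext5_Keven:
  assumes "Y \<subseteq> P5"
  shows "Keven (ext5 Y)" "ext5 Y \<subseteq> PP" "ext5 Y \<inter> P5 = Y"
proof -
  have finY: "finite Y" using assms unfolding P5_def P510 using finite_subset by blast
  show "ext5 Y \<subseteq> PP" using assms by (auto simp: ext5_def PP_def P5_def)
  show "ext5 Y \<inter> P5 = Y" using assms by (auto simp: ext5_def P5_def)
  show "Keven (ext5 Y)" unfolding Keven_def
  proof (intro allI impI)
    fix i :: nat assume i6: "i < 6"
    show "even (card {p\<in>ext5 Y. fst p = i \<or> snd p = i})"
    proof (cases "i = 0")
      case True
      have "{p\<in>ext5 Y. fst p = i \<or> snd p = i} = (\<lambda>i. (0,i)) ` {i\<in>{1..<6}. odd (cnt Y i)}"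
        using assms True by (auto simp: ext5_def P5_def)
      then have "card {p\<in>ext5 Y. fst p = i \<or> snd p = i} = card {i\<in>{1..<6}. odd (cnt Y i)}"
        by (simp add: card_image inj_on_def)
      moreover have "even (\<Sum>i\<in>{1..<6}. cnt Y i)" using handshake[OF assms] by simp
      ultimately show ?thesis using evsum_iff[of "{1..<6}" "cnt Y"] by simp
    next
      case False
      have eq: "{p\<in>ext5 Y. fst p = i \<or> snd p = i} = {p\<in>Y. fst p = i \<or> snd p = i} \<union> (if odd (cnt Y i) then {(0,i)} else {})"
        using False i6 by (auto simp: ext5_def)
      have "(0,i) \<notin> Y" using assms by (auto simp: P5_def)
      then have "card {p\<in>ext5 Y. fst p = i \<or> snd p = i} = cnt Y i + (if odd (cnt Y i) then 1 else 0)"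
        unfolding eq cnt_def using finY by auto
      then show ?thesis by auto
    qed
  qed
qed

lemma t1: "inj_on ext5 (Pow P5)"
  proof (rule inj_onI)
    fix Y Y' assume a: "Y \<in> Pow P5" "Y' \<in> Pow P5" "ext5 Y = ext5 Y'"
    have "Y = ext5 Y \<inter> P5" using ext5_Keven(3)[of Y] a by simp
    also have "\<dots> = ext5 Y' \<inter> P5" using a by simp
    also have "\<dots> = Y'" using ext5_Keven(3)[of Y'] a by simp
    finally show "Y = Y'" .
  qed
lemma t2: "card (Pow P5) = 2^10"
proof -
  have "finite P5" unfolding P5_def P510 by simp
  then have "card (Pow P5) = 2 ^ card P5" by (rule card_Pow)
  then show ?thesis unfolding P5_def card_P5 .
qed
lemma t3: "ext5 ` Pow P5 \<subseteq> {Y. Y \<subseteq> PP \<and> Keven Y}" using ext5_Keven by blast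

lemma many_Keven: "2^10 \<le> card {Y. Y \<subseteq> PP \<and> Keven Y}"
proof -
  have c: "card (ext5 ` Pow P5) = 2^10" using card_image[OF t1] t2 by simp
  have f: "finite {Y. Y \<subseteq> PP \<and> Keven Y}" using finite_PP by simp
  show ?thesis using card_mono[OF f t3] c by simp
qed




locale pl =
  fixes E :: "'e set" and ends :: "'e \<Rightarrow> 'v set" and F :: "'f set"
    and s1 s2 :: "'e \<Rightarrow> 'f" and \<phi> :: "nat \<Rightarrow> 'v set"
  assumes finE: "finite E" and finF: "finite F"
  and two: "\<And>e. e \<in> E \<Longrightarrow> card (ends e) = 2"
  and sF: "\<And>e. e \<in> E \<Longrightarrow> s1 e \<in> F \<and> s2 e \<in> F"
  and bdeven: "\<And>I v. I \<subseteq> F \<Longrightarrow> even (card {e \<in> {e\<in>E. (s1 e \<in> I) \<noteq> (s2 e \<in> I)}. v \<in> ends e})"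
  and gen: "\<And>Z. Z \<subseteq> E \<Longrightarrow> (\<forall>v. even (card {e\<in>Z. v \<in> ends e})) \<Longrightarrow>
              \<exists>I\<subseteq>F. {e\<in>E. (s1 e \<in> I) \<noteq> (s2 e \<in> I)} = Z"
  and finphi: "\<And>i. i < 6 \<Longrightarrow> finite (\<phi> i)"
  and nonempty: "\<And>i. i < 6 \<Longrightarrow> \<phi> i \<noteq> {}"
  and conn: "\<And>i x y. i < 6 \<Longrightarrow> x \<in> \<phi> i \<Longrightarrow> y \<in> \<phi> i \<Longrightarrow>
     (\<lambda>a b. a \<in> \<phi> i \<and> b \<in> \<phi> i \<and> (\<exists>e\<in>E. ends e = {a,b}))\<^sup>*\<^sup>* x y"
  and disj: "\<And>i j. i < 6 \<Longrightarrow> j < 6 \<Longrightarrow> i \<noteq> j \<Longrightarrow> \<phi> i \<inter> \<phi> j = {}"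
  and adj: "\<And>i j. i < 6 \<Longrightarrow> j < 6 \<Longrightarrow> i \<noteq> j \<Longrightarrow> \<exists>e\<in>E. \<exists>a\<in>\<phi> i. \<exists>b\<in>\<phi> j. ends e = {a,b}"
begin

definition bd :: "'f set \<Rightarrow> 'e set" where "bd I = {e\<in>E. (s1 e \<in> I) \<noteq> (s2 e \<in> I)}"

definition Ein_i :: "nat \<Rightarrow> 'e set" where "Ein_i i = {e\<in>E. ends e \<subseteq> \<phi> i}"

lemma walk_parity:
  assumes i: "i < 6" and x: "x \<in> \<phi> i"
  and w: "(\<lambda>a b. a \<in> \<phi> i \<and> b \<in> \<phi> i \<and> (\<exists>e\<in>E. ends e = {a,b}))\<^sup>*\<^sup>* x z"
  shows "\<exists>P. P \<subseteq> Ein_i i \<and> finite P \<and> (\<forall>v. odd (dg ends P v) \<longleftrightarrow> ((v = x) \<noteq> (v = z)))"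
  using w
proof (induction rule: rtranclp_induct)
  case base
  show ?case by (rule exI[of _ "{}"]) (simp add: dg_def)
next
  case (step z z')
  then obtain P where P: "P \<subseteq> Ein_i i" "finite P" "\<forall>v. odd (dg ends P v) \<longleftrightarrow> ((v = x) \<noteq> (v = z))"
    by blast
  from step.hyps(2) obtain e where e: "e \<in> E" "ends e = {z,z'}" "z \<in> \<phi> i" "z' \<in> \<phi> i" by blast
  have zz: "z \<noteq> z'" using two[OF e(1)] e(2) by (cases "z = z'") auto
  define P' where "P' = (P - {e}) \<union> ({e} - P)"
  have "P' \<subseteq> Ein_i i" using P(1) e by (auto simp: P'_def Ein_i_def)
  moreover have "finite P'" using P(2) by (simp add: P'_def)
  moreover have "\<forall>v. odd (dg ends P' v) \<longleftrightarrow> ((v = x) \<noteq> (v = z'))"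
  proof
    fix v
    have "{e'\<in>{e}. v \<in> ends e'} = (if v = z \<or> v = z' then {e} else {})" using e(2) by auto
    then have d1: "dg ends {e} v = (if v = z \<or> v = z' then 1 else 0)"
      by (simp add: dg_def)
    have "even (dg ends P' v) \<longleftrightarrow> (even (dg ends P v) \<longleftrightarrow> even (dg ends {e} v))"
      unfolding P'_def by (rule dg_symdiff) (simp_all add: P(2))
    then show "odd (dg ends P' v) \<longleftrightarrow> ((v = x) \<noteq> (v = z'))"
      using P(3) d1 zz by auto
  qed
  ultimately show ?case by blast
qed

lemma tjoin:
  assumes i: "i < 6"
  shows "T \<subseteq> \<phi> i \<Longrightarrow> even (card T) \<Longrightarrow>
    \<exists>J. J \<subseteq> Ein_i i \<and> finite J \<and> (\<forall>v. odd (dg ends J v) \<longleftrightarrow> v \<in> T)"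
proof (induction "card T" arbitrary: T rule: less_induct)
  case less
  have finT: "finite T" using less.prems finphi[OF i] finite_subset by blast
  show ?case
  proof (cases "T = {}")
    case True then show ?thesis by (intro exI[of _ "{}"]) (simp add: dg_def)
  next
    case False
    then obtain u where u: "u \<in> T" by blast
    have "card T \<noteq> 1" using less.prems(2) by auto
    have "T - {u} \<noteq> {}"
    proof
      assume "T - {u} = {}"
      then have "T = {u}" using u by blast
      then show False using \<open>card T \<noteq> 1\<close> by simp
    qed
    then obtain w where w: "w \<in> T" "w \<noteq> u" by blast
    define T' where "T' = T - {u, w}"
    have cT': "card T' = card T - 2" using u w finT by (simp add: T'_def card_Diff_subset)
    have "card {u,w} \<le> card T" using u w finT by (intro card_mono) auto
    then have "card T \<ge> 2" using w by simp
    then have lt: "card T' < card T" using cT' by simp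
    have ev': "even (card T')" using cT' less.prems(2) \<open>card T \<ge> 2\<close> by simp
    obtain J' where J': "J' \<subseteq> Ein_i i" "finite J'" "\<forall>v. odd (dg ends J' v) \<longleftrightarrow> v \<in> T'"
    proof -
      have "T' \<subseteq> \<phi> i" using less.prems(1) by (auto simp: T'_def)
      then show ?thesis using less.hyps[OF lt _ ev'] that by blast
    qed
    have uw: "u \<in> \<phi> i" "w \<in> \<phi> i" using u w less.prems(1) by auto
    obtain P where P: "P \<subseteq> Ein_i i" "finite P" "\<forall>v. odd (dg ends P v) \<longleftrightarrow> ((v = u) \<noteq> (v = w))"
      using walk_parity[OF i uw(1) conn[OF i uw(1) uw(2)]] by blast
    define J where "J = (J' - P) \<union> (P - J')"
    have "J \<subseteq> Ein_i i" using J' P by (auto simp: J_def)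
    moreover have "finite J" using J' P by (simp add: J_def)
    moreover have "\<forall>v. odd (dg ends J v) \<longleftrightarrow> v \<in> T"
    proof
      fix v
      have "even (dg ends J v) \<longleftrightarrow> (even (dg ends J' v) \<longleftrightarrow> even (dg ends P v))"
        unfolding J_def by (rule dg_symdiff) (simp_all add: J'(2) P(2))
      then show "odd (dg ends J v) \<longleftrightarrow> v \<in> T"
        using J'(3) P(3) u w by (auto simp: T'_def)
    qed
    ultimately show ?thesis by blast
  qed
qed


definition eps :: "nat \<times> nat \<Rightarrow> 'e" where
  "eps p = (SOME e. e \<in> E \<and> (\<exists>a\<in>\<phi> (fst p). \<exists>b\<in>\<phi> (snd p). ends e = {a,b}))"

lemma eps_prop:
  assumes "p \<in> PP"
  shows "eps p \<in> E \<and> (\<exists>a\<in>\<phi> (fst p). \<exists>b\<in>\<phi> (snd p). ends (eps p) = {a,b})"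
proof -
  have "fst p < 6" "snd p < 6" "fst p \<noteq> snd p" using assms by (auto simp: PP_def)
  then have "\<exists>e. e \<in> E \<and> (\<exists>a\<in>\<phi> (fst p). \<exists>b\<in>\<phi> (snd p). ends e = {a,b})" using adj by blast
  then show ?thesis unfolding eps_def by (rule someI_ex)
qed

lemma eps_card:
  assumes p: "p \<in> PP" and i: "i < 6"
  shows "card (ends (eps p) \<inter> \<phi> i) = (if fst p = i \<or> snd p = i then 1 else 0)"
proof -
  have p6: "fst p < 6" "snd p < 6" "fst p < snd p" using p by (auto simp: PP_def)
  obtain a b where ab: "a \<in> \<phi> (fst p)" "b \<in> \<phi> (snd p)" "ends (eps p) = {a,b}" using eps_prop[OF p] by blast
  have d: "\<phi> (fst p) \<inter> \<phi> (snd p) = {}" using disj p6 by simp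
  show ?thesis
  proof (cases "fst p = i")
    case True
    have "b \<notin> \<phi> i" using d ab True by auto
    then have "ends (eps p) \<inter> \<phi> i = {a}" using ab True by auto
    then show ?thesis using True by simp
  next
    case False
    note F1 = False
    show ?thesis
    proof (cases "snd p = i")
      case True
      have "a \<notin> \<phi> i" using d ab True by auto
      then have "ends (eps p) \<inter> \<phi> i = {b}" using ab True by auto
      then show ?thesis using True by simp
    next
      case False
      have "a \<notin> \<phi> i" using disj[of "fst p" i] F1 ab p6 i by auto
      moreover have "b \<notin> \<phi> i" using disj[of "snd p" i] False ab p6 i by auto
      ultimately have "ends (eps p) \<inter> \<phi> i = {}" using ab by auto
      then show ?thesis using F1 False by simp
    qed
  qed
qed

lemma eps_inj: "inj_on eps PP"
proof (rule inj_onI)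
  fix p q assume p: "p \<in> PP" and q: "q \<in> PP" and e: "eps p = eps q"
  have "\<forall>i<6. (fst p = i \<or> snd p = i) \<longleftrightarrow> (fst q = i \<or> snd q = i)"
  proof (intro allI impI)
    fix i :: nat assume "i < 6"
    then show "(fst p = i \<or> snd p = i) \<longleftrightarrow> (fst q = i \<or> snd q = i)"
    proof -
      have "card (ends (eps p) \<inter> \<phi> i) = card (ends (eps q) \<inter> \<phi> i)" using e by simp
      then show ?thesis unfolding eps_card[OF p \<open>i<6\<close>] eps_card[OF q \<open>i<6\<close>] by (simp split: if_splits)
    qed
  qed
  note H = this
  have o: "fst p < snd p" "snd p < 6" "fst q < snd q" "snd q < 6" using p q by (auto simp: PP_def)
  have A: "fst q = fst p \<or> snd q = fst p" using H[rule_format, of "fst p"] o by simp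
  have B: "fst q = snd p \<or> snd q = snd p" using H[rule_format, of "snd p"] o by simp
  have "fst p = fst q \<and> snd p = snd q" using A B o by auto
  then show "p = q" by (simp add: prod_eq_iff)
qed

definition Ein :: "'e set" where "Ein = {e\<in>E. \<exists>i<6. ends e \<subseteq> \<phi> i}"

lemma eps_notEin: "p \<in> PP \<Longrightarrow> eps p \<notin> Ein"
proof
  assume p: "p \<in> PP" and "eps p \<in> Ein"
  then obtain k where k: "k < 6" "ends (eps p) \<subseteq> \<phi> k" and E: "eps p \<in> E" by (auto simp: Ein_def)
  then have "ends (eps p) \<inter> \<phi> k = ends (eps p)" by auto
  then have "card (ends (eps p) \<inter> \<phi> k) = 2" using two[OF E] by simp
  then show False using eps_card[OF p k(1)] by (simp split: if_splits)
qed

lemma Ein_i_sub: "i < 6 \<Longrightarrow> Ein_i i \<subseteq> Ein"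
  by (auto simp: Ein_i_def Ein_def)

definition EH :: "'e set" where "EH = eps ` PP \<union> Ein"

definition closed :: "'f set \<Rightarrow> bool" where
  "closed I \<longleftrightarrow> I \<subseteq> F \<and> (\<forall>e\<in>E. e \<notin> EH \<longrightarrow> ((s1 e \<in> I) \<longleftrightarrow> (s2 e \<in> I)))"

definition beta :: "'f set \<Rightarrow> (nat \<times> nat) set" where
  "beta I = {p\<in>PP. eps p \<in> bd I}"

lemma sum_card_phi:
  assumes "finite W" "i < 6"
  shows "(\<Sum>v\<in>\<phi> i. dg ends W v) = (\<Sum>e\<in>W. card (ends e \<inter> \<phi> i))"
proof -
  have "(\<Sum>v\<in>\<phi> i. dg ends W v) = (\<Sum>e\<in>W. card {v\<in>\<phi> i. v \<in> ends e})"
    unfolding dg_def by (rule swap_count) (simp_all add: assms finphi)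
  also have "\<dots> = (\<Sum>e\<in>W. card (ends e \<inter> \<phi> i))"
    by (rule sum.cong) (auto intro: arg_cong[where f=card])
  finally show ?thesis .
qed

lemma sum_eps:
  assumes "Y \<subseteq> PP" "i < 6"
  shows "(\<Sum>e\<in>eps ` Y. card (ends e \<inter> \<phi> i)) = card {p\<in>Y. fst p = i \<or> snd p = i}"
proof -
  have inj: "inj_on eps Y" using eps_inj assms(1) inj_on_subset by blast
  have finY: "finite Y" using assms(1) finite_PP finite_subset by blast
  have "(\<Sum>e\<in>eps ` Y. card (ends e \<inter> \<phi> i)) = (\<Sum>p\<in>Y. card (ends (eps p) \<inter> \<phi> i))"
    by (simp add: sum.reindex[OF inj])
  also have "\<dots> = (\<Sum>p\<in>Y. if fst p = i \<or> snd p = i then 1 else 0)"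
    by (rule sum.cong) (use assms eps_card in auto)
  also have "\<dots> = card {p\<in>Y. fst p = i \<or> snd p = i}"
    by (simp add: card_filter_sum[OF finY])
  finally show ?thesis .
qed

lemma closed_Keven:
  assumes cl: "closed I"
  shows "Keven (beta I)"
  unfolding Keven_def
proof (intro allI impI)
  fix i :: nat assume i: "i < 6"
  define W where "W = bd I"
  have IF: "I \<subseteq> F" using cl by (simp add: closed_def)
  have WE: "W \<subseteq> E" by (auto simp: W_def bd_def)
  have finW: "finite W" using WE finE finite_subset by blast
  have h1: "even (dg ends W v)" for v
    using bdeven[OF IF, of v] by (simp add: dg_def W_def bd_def)
  have h2: "even (\<Sum>v\<in>\<phi> i. dg ends W v)" using h1 by (simp add: dvd_sum)
  have split: "W = (W \<inter> eps ` PP) \<union> (W - eps ` PP)" by auto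
  have h3: "(\<Sum>e\<in>W. card (ends e \<inter> \<phi> i)) =
      (\<Sum>e\<in>W \<inter> eps ` PP. card (ends e \<inter> \<phi> i)) + (\<Sum>e\<in>W - eps ` PP. card (ends e \<inter> \<phi> i))"
    using finW by (subst split, subst sum.union_disjoint) auto
  have h5: "even (\<Sum>e\<in>W - eps ` PP. card (ends e \<inter> \<phi> i))"
  proof (rule dvd_sum)
    fix e assume e: "e \<in> W - eps ` PP"
    then have eE: "e \<in> E" using WE by auto
    have "e \<in> EH"
    proof (rule ccontr)
      assume "e \<notin> EH"
      then have "(s1 e \<in> I) \<longleftrightarrow> (s2 e \<in> I)" using cl eE by (auto simp: closed_def)
      then show False using e by (auto simp: W_def bd_def)
    qed
    then have "e \<in> Ein" using e by (auto simp: EH_def)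
    then obtain k where k: "k < 6" "ends e \<subseteq> \<phi> k" by (auto simp: Ein_def)
    show "even (card (ends e \<inter> \<phi> i))"
    proof (cases "k = i")
      case True
      then have "ends e \<inter> \<phi> i = ends e" using k by auto
      then show ?thesis using two[OF eE] by simp
    next
      case False
      then have "ends e \<inter> \<phi> i = {}" using k disj[of k i] i by auto
      then show ?thesis by simp
    qed
  qed
  have WX: "W \<inter> eps ` PP = eps ` (beta I)" by (auto simp: W_def beta_def)
  have bPP: "beta I \<subseteq> PP" by (auto simp: beta_def)
  have "(\<Sum>e\<in>W \<inter> eps ` PP. card (ends e \<inter> \<phi> i)) = card {p\<in>beta I. fst p = i \<or> snd p = i}"
    unfolding WX by (rule sum_eps[OF bPP i])
  then show "even (card {p\<in>beta I. fst p = i \<or> snd p = i})"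
    using h2 h3 h5 sum_card_phi[OF finW i] by simp
qed


lemma lift:
  assumes Y: "Y \<subseteq> PP" and K: "Keven Y"
  shows "\<exists>I. closed I \<and> beta I = Y"
proof -
  define Ye where "Ye = eps ` Y"
  have finY: "finite Y" using Y finite_PP finite_subset by blast
  have finYe: "finite Ye" using finY by (simp add: Ye_def)
  have YeE: "Ye \<subseteq> E" using Y eps_prop by (auto simp: Ye_def)
  define Tt where "Tt i = {v\<in>\<phi> i. odd (dg ends Ye v)}" for i
  have evT: "even (card (Tt i))" if i: "i < 6" for i
  proof -
    have "(\<Sum>v\<in>\<phi> i. dg ends Ye v) = card {p\<in>Y. fst p = i \<or> snd p = i}"
      using sum_card_phi[OF finYe i] sum_eps[OF Y i] by (simp add: Ye_def)
    then have "even (\<Sum>v\<in>\<phi> i. dg ends Ye v)" using K i by (simp add: Keven_def)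
    moreover have "even (sum (dg ends Ye) (\<phi> i)) = even (card {v\<in>\<phi> i. odd (dg ends Ye v)})"
      by (rule evsum_iff[OF finphi[OF i]])
    ultimately show ?thesis unfolding Tt_def by simp
  qed
  have "\<forall>i\<in>{..<6}. \<exists>J. J \<subseteq> Ein_i i \<and> finite J \<and> (\<forall>v. odd (dg ends J v) \<longleftrightarrow> v \<in> Tt i)"
  proof
    fix i assume "i \<in> {..<(6::nat)}"
    then have i: "i < 6" by simp
    show "\<exists>J. J \<subseteq> Ein_i i \<and> finite J \<and> (\<forall>v. odd (dg ends J v) \<longleftrightarrow> v \<in> Tt i)"
    proof -
      have "Tt i \<subseteq> \<phi> i" by (auto simp: Tt_def)
      from tjoin[OF i this evT[OF i]] show ?thesis .
    qed
  qed
  then obtain Jf where Jf: "\<And>i. i \<in> {..<6} \<Longrightarrow> Jf i \<subseteq> Ein_i i \<and> finite (Jf i) \<and> (\<forall>v. odd (dg ends (Jf i) v) \<longleftrightarrow> v \<in> Tt i)"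
    using bchoice[of "{..<(6::nat)}"] by metis
  define J where "J = (\<Union>i<6. Jf i)"
  define W where "W = Ye \<union> J"
  have JEin: "J \<subseteq> Ein" using Jf Ein_i_sub by (fastforce simp: J_def)
  have JE: "J \<subseteq> E" using JEin by (auto simp: Ein_def)
  have WE: "W \<subseteq> E" using YeE JE by (auto simp: W_def)
  have YeJ: "Ye \<inter> J = {}" using JEin eps_notEin Y by (auto simp: Ye_def)
  have evW: "\<forall>v. even (card {e\<in>W. v \<in> ends e})"
  proof
    fix v
    show "even (card {e\<in>W. v \<in> ends e})"
    proof (cases "\<exists>i<6. v \<in> \<phi> i")
      case True
      then obtain i where i: "i < 6" "v \<in> \<phi> i" by blast
      have Ji: "Jf i \<subseteq> Ein_i i" "finite (Jf i)" "\<forall>v. odd (dg ends (Jf i) v) \<longleftrightarrow> v \<in> Tt i"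
        using Jf[of i] i by auto
      have eq: "{e\<in>W. v \<in> ends e} = {e\<in>Ye. v \<in> ends e} \<union> {e\<in>Jf i. v \<in> ends e}"
      proof
        show "{e\<in>W. v \<in> ends e} \<subseteq> {e\<in>Ye. v \<in> ends e} \<union> {e\<in>Jf i. v \<in> ends e}"
        proof
          fix e assume e: "e \<in> {e\<in>W. v \<in> ends e}"
          show "e \<in> {e\<in>Ye. v \<in> ends e} \<union> {e\<in>Jf i. v \<in> ends e}"
          proof (cases "e \<in> Ye")
            case True then show ?thesis using e by auto
          next
            case False
            then obtain k where k: "k < 6" "e \<in> Jf k" using e by (auto simp: W_def J_def)
            then have "ends e \<subseteq> \<phi> k" using Jf[of k] by (auto simp: Ein_i_def)
            then have "v \<in> \<phi> k" using e by auto
            then have "k = i" using disj[of k i] i k by auto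
            then show ?thesis using k e by auto
          qed
        qed
        show "{e\<in>Ye. v \<in> ends e} \<union> {e\<in>Jf i. v \<in> ends e} \<subseteq> {e\<in>W. v \<in> ends e}"
          using i by (auto simp: W_def J_def)
      qed
      have dis: "{e\<in>Ye. v \<in> ends e} \<inter> {e\<in>Jf i. v \<in> ends e} = {}"
        using YeJ i by (auto simp: J_def)
      have "card {e\<in>W. v \<in> ends e} = dg ends Ye v + dg ends (Jf i) v"
        unfolding eq dg_def using finYe Ji(2) dis by (intro card_Un_disjoint) auto
      moreover have "odd (dg ends (Jf i) v) \<longleftrightarrow> odd (dg ends Ye v)" using Ji(3) i by (simp add: Tt_def)
      ultimately show ?thesis by simp
    next
      case False
      have "{e\<in>W. v \<in> ends e} = {}"
      proof (rule ccontr)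
        assume "{e\<in>W. v \<in> ends e} \<noteq> {}"
        then obtain e where e: "e \<in> W" "v \<in> ends e" by blast
        show False
        proof (cases "e \<in> Ye")
          case True
          then obtain p where p: "p \<in> Y" "e = eps p" by (auto simp: Ye_def)
          then have pP: "p \<in> PP" using Y by auto
          obtain a b where ab: "a \<in> \<phi> (fst p)" "b \<in> \<phi> (snd p)" "ends (eps p) = {a,b}" using eps_prop[OF pP] by blast
          have "fst p < 6" "snd p < 6" using pP by (auto simp: PP_def)
          then show False using False ab e p by auto
        next
          case False
          then obtain k where k: "k < 6" "e \<in> Jf k" using e by (auto simp: W_def J_def)
          then have "ends e \<subseteq> \<phi> k" using Jf[of k] by (auto simp: Ein_i_def)
          then show False using \<open>\<not> (\<exists>i<6. v \<in> \<phi> i)\<close> k e by auto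
        qed
      qed
      then show ?thesis by (metis card.empty even_zero)
    qed
  qed
  obtain I where I: "I \<subseteq> F" "{e\<in>E. (s1 e \<in> I) \<noteq> (s2 e \<in> I)} = W" using gen[OF WE evW] by blast
  have bdI: "bd I = W" using I(2) by (simp add: bd_def)
  have WEH: "W \<subseteq> EH" using Y JEin by (auto simp: W_def Ye_def EH_def)
  have "closed I"
    unfolding closed_def
  proof (intro conjI ballI impI)
    show "I \<subseteq> F" by (rule I(1))
    fix e assume "e \<in> E" "e \<notin> EH"
    then have "e \<notin> bd I" using bdI WEH by auto
    then show "(s1 e \<in> I) \<longleftrightarrow> (s2 e \<in> I)" using \<open>e \<in> E\<close> by (auto simp: bd_def)
  qed
  moreover have "beta I = Y"
  proof
    show "beta I \<subseteq> Y"
    proof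
      fix p assume "p \<in> beta I"
      then have p: "p \<in> PP" "eps p \<in> W" by (auto simp: beta_def bdI)
      have "eps p \<notin> J" using eps_notEin[OF p(1)] JEin by auto
      then have "eps p \<in> Ye" using p by (auto simp: W_def)
      then obtain q where "q \<in> Y" "eps p = eps q" by (auto simp: Ye_def)
      then show "p \<in> Y" using eps_inj p(1) Y by (metis inj_onD subsetD)
    qed
    show "Y \<subseteq> beta I" using Y by (auto simp: beta_def bdI W_def Ye_def)
  qed
  ultimately show ?thesis by blast
qed


definition fadj :: "'f \<Rightarrow> 'f \<Rightarrow> bool" where
  "fadj f g \<longleftrightarrow> (\<exists>e\<in>E. e \<notin> EH \<and> ((s1 e = f \<and> s2 e = g) \<or> (s1 e = g \<and> s2 e = f)))"

definition cls :: "'f \<Rightarrow> 'f set" where "cls f = {g. fadj\<^sup>*\<^sup>* f g}"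

lemma fadj_sym: "fadj f g \<Longrightarrow> fadj g f"
  unfolding fadj_def by blast

lemma rt_sym: "fadj\<^sup>*\<^sup>* f g \<Longrightarrow> fadj\<^sup>*\<^sup>* g f"
proof (induction rule: rtranclp_induct)
  case base then show ?case by simp
next
  case (step y z)
  then show ?case using fadj_sym converse_rtranclp_into_rtranclp by metis
qed

lemma self_cls: "f \<in> cls f" by (simp add: cls_def)

lemma cls_eq: "g \<in> cls f \<Longrightarrow> cls g = cls f"
  unfolding cls_def using rt_sym rtranclp_trans by (metis (mono_tags, lifting) Collect_cong mem_Collect_eq)

lemma cls_F: "f \<in> F \<Longrightarrow> cls f \<subseteq> F"
proof
  fix g assume f: "f \<in> F" and "g \<in> cls f"
  then have "fadj\<^sup>*\<^sup>* f g" by (simp add: cls_def)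
  then show "g \<in> F"
  proof (induction rule: rtranclp_induct)
    case base then show ?case using f .
  next
    case (step y z)
    then show ?case using sF unfolding fadj_def by blast
  qed
qed

lemma cls_closed: "f \<in> F \<Longrightarrow> closed (cls f)"
  unfolding closed_def
proof (intro conjI ballI impI)
  assume f: "f \<in> F"
  show "cls f \<subseteq> F" by (rule cls_F[OF f])
  fix e assume e: "e \<in> E" "e \<notin> EH"
  have a: "fadj (s1 e) (s2 e)" "fadj (s2 e) (s1 e)" using e unfolding fadj_def by blast+
  show "(s1 e \<in> cls f) \<longleftrightarrow> (s2 e \<in> cls f)"
    using a unfolding cls_def by (auto intro: rtranclp.rtrancl_into_rtrancl)
qed

lemma closed_sub: assumes cl: "closed I" and f: "f \<in> I" shows "cls f \<subseteq> I"
proof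
  fix g assume "g \<in> cls f"
  then have "fadj\<^sup>*\<^sup>* f g" by (simp add: cls_def)
  then show "g \<in> I"
  proof (induction rule: rtranclp_induct)
    case base then show ?case using f .
  next
    case (step y z)
    then obtain e where e: "e \<in> E" "e \<notin> EH" "(s1 e = y \<and> s2 e = z) \<or> (s1 e = z \<and> s2 e = y)"
      unfolding fadj_def by blast
    then have "(s1 e \<in> I) \<longleftrightarrow> (s2 e \<in> I)" using cl by (auto simp: closed_def)
    then show ?case using e step.IH by auto
  qed
qed

lemma mem_cls_iff: assumes cl: "closed I" and f: "f \<in> F"
  shows "f \<in> I \<longleftrightarrow> cls f \<in> cls ` I"
proof
  assume "cls f \<in> cls ` I"
  then obtain g where g: "g \<in> I" "cls f = cls g" by auto
  have "f \<in> cls g" using self_cls[of f] g by simp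
  then show "f \<in> I" using closed_sub[OF cl g(1)] by auto
qed auto

definition c1 :: "nat \<times> nat \<Rightarrow> 'f set" where "c1 p = cls (s1 (eps p))"
definition c2 :: "nat \<times> nat \<Rightarrow> 'f set" where "c2 p = cls (s2 (eps p))"

definition Psi :: "'f set set \<Rightarrow> (nat \<times> nat) set" where
  "Psi A = {p\<in>PP. c1 p \<noteq> c2 p \<and> ((c1 p \<in> A) \<noteq> (c2 p \<in> A))}"

lemma beta_Psi: assumes cl: "closed I" shows "beta I = Psi (cls ` I)"
proof (rule set_eqI)
  fix p
  show "p \<in> beta I \<longleftrightarrow> p \<in> Psi (cls ` I)"
  proof (cases "p \<in> PP")
    case False then show ?thesis by (simp add: beta_def Psi_def)
  next
    case True
    have E: "eps p \<in> E" using eps_prop[OF True] by blast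
    have m1: "s1 (eps p) \<in> I \<longleftrightarrow> c1 p \<in> cls ` I" unfolding c1_def using mem_cls_iff[OF cl] sF[OF E] by blast
    have m2: "s2 (eps p) \<in> I \<longleftrightarrow> c2 p \<in> cls ` I" unfolding c2_def using mem_cls_iff[OF cl] sF[OF E] by blast
    show ?thesis using True E m1 m2 by (auto simp: beta_def Psi_def bd_def)
  qed
qed

definition Cp :: "'f set set" where
  "Cp = c1 ` {p\<in>PP. c1 p \<noteq> c2 p} \<union> c2 ` {p\<in>PP. c1 p \<noteq> c2 p}"

lemma finite_Cp: "finite Cp" using finite_PP by (simp add: Cp_def)

lemma Psi_int: "Psi A = Psi (A \<inter> Cp)"
  unfolding Psi_def Cp_def by auto

lemma Psi_compl: "Psi A = Psi (Cp - A)"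
  unfolding Psi_def Cp_def by auto

lemma Psi_single: assumes c: "c \<in> Cp" shows "3 \<le> card (Psi {c})"
proof -
  obtain p0 f where p0: "p0 \<in> PP" "c1 p0 \<noteq> c2 p0" and f: "f = s1 (eps p0) \<or> f = s2 (eps p0)" and cf: "c = cls f"
    using c unfolding Cp_def c1_def c2_def by blast
  have E: "eps p0 \<in> E" using eps_prop[OF p0(1)] by blast
  have fF: "f \<in> F" using f sF[OF E] by blast
  have cl: "closed c" unfolding cf by (rule cls_closed[OF fF])
  have "cls ` c = {c}"
  proof
    show "cls ` c \<subseteq> {c}" using cls_eq cf by auto
    show "{c} \<subseteq> cls ` c" using self_cls[of f] cf by (metis empty_subsetI image_eqI insert_subset)
  qed
  then have "beta c = Psi {c}" using beta_Psi[OF cl] by simp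
  then have K: "Keven (Psi {c})" using closed_Keven[OF cl] by simp
  have "p0 \<in> Psi {c}" using p0 f cf by (auto simp: Psi_def c1_def c2_def)
  moreover have "Psi {c} \<subseteq> PP" by (auto simp: Psi_def)
  ultimately show ?thesis using three K by blast
qed

lemma card_Cp: "card Cp \<le> 10"
proof -
  define R where "R c p \<longleftrightarrow> c1 p \<noteq> c2 p \<and> ((c1 p = c) \<noteq> (c2 p = c))" for c p
  have PsiR: "Psi {c} = {p\<in>PP. R c p}" for c by (auto simp: Psi_def R_def)
  have "3 * card Cp = (\<Sum>c\<in>Cp. 3)" by simp
  also have "\<dots> \<le> (\<Sum>c\<in>Cp. card (Psi {c}))" by (rule sum_mono) (rule Psi_single)
  also have "\<dots> = (\<Sum>c\<in>Cp. card {p\<in>PP. R c p})" by (simp add: PsiR)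
  also have "\<dots> = (\<Sum>p\<in>PP. card {c\<in>Cp. R c p})" by (rule swap_count[OF finite_Cp finite_PP])
  also have "\<dots> \<le> (\<Sum>p\<in>PP. 2)"
  proof (rule sum_mono)
    fix p
    have "{c\<in>Cp. R c p} \<subseteq> {c1 p, c2 p}" by (auto simp: R_def)
    then have "card {c\<in>Cp. R c p} \<le> card {c1 p, c2 p}" by (intro card_mono) auto
    also have "\<dots> \<le> 2" by (simp add: card_insert_le_m1)
    finally show "card {c\<in>Cp. R c p} \<le> 2" .
  qed
  also have "\<dots> = 30" using card_PP by (simp add: PP_def)
  finally show ?thesis by simp
qed

theorem pl_False: False
proof -
  define KE where "KE = {Y. Y \<subseteq> PP \<and> Keven Y}"
  define c0 where "c0 = (SOME c. c \<in> Cp)"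
  have sub: "KE \<subseteq> Psi ` Pow (Cp - {c0})"
  proof
    fix Y assume "Y \<in> KE"
    then have Y: "Y \<subseteq> PP" "Keven Y" by (auto simp: KE_def)
    obtain I where I: "closed I" "beta I = Y" using lift[OF Y] by blast
    define A where "A = cls ` I \<inter> Cp"
    have YA: "Y = Psi A" using I beta_Psi Psi_int by (simp add: A_def)
    show "Y \<in> Psi ` Pow (Cp - {c0})"
    proof (cases "c0 \<in> A")
      case True
      have "Y = Psi (Cp - A)" using YA Psi_compl by simp
      moreover have "Cp - A \<in> Pow (Cp - {c0})" using True by auto
      ultimately show ?thesis by blast
    next
      case False
      then have "A \<in> Pow (Cp - {c0})" by (auto simp: A_def)
      then show ?thesis using YA by blast
    qed
  qed
  have fin: "finite (Pow (Cp - {c0}))" using finite_Cp by simp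
  have "card KE \<le> card (Psi ` Pow (Cp - {c0}))" using sub fin by (intro card_mono) auto
  also have "\<dots> \<le> card (Pow (Cp - {c0}))" using fin by (rule card_image_le)
  also have "\<dots> = 2 ^ card (Cp - {c0})" using finite_Cp by (simp add: card_Pow)
  also have "\<dots> \<le> 2 ^ 9"
  proof (rule power_increasing)
    show "card (Cp - {c0}) \<le> 9"
    proof (cases "Cp = {}")
      case True then show ?thesis by simp
    next
      case False
      then have "c0 \<in> Cp" unfolding c0_def by (metis some_in_eq)
      then have "card (Cp - {c0}) = card Cp - 1" using finite_Cp by simp
      then show ?thesis using card_Cp by simp
    qed
  qed simp
  finally have "card KE \<le> 2^9" .
  moreover have "2^10 \<le> card KE" using many_Keven by (simp add: KE_def)
  ultimately show False by simp
qed

end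



definition Sb :: "nat \<times> nat \<Rightarrow> (nat \<times> nat) set" where
  "Sb b = {brick_x2 b, brick_x3 b, brick_omega b}"

lemma cw_edge_sym: "cw_edge R u v = cw_edge R v u"
  unfolding cw_edge_def by blast

lemma grid_adj:
  assumes "grid_edge R p q"
  shows "\<exists>e\<in>GE (2*R) R. gends e = {p,q}"
proof -
  obtain a b c d where pq: "p = (a,b)" "q = (c,d)" by (cases p, cases q)
  have gv: "1 \<le> a" "a \<le> 2*R" "1 \<le> b" "b \<le> R" "1 \<le> c" "c \<le> 2*R" "1 \<le> d" "d \<le> R"
    using assms pq by (auto simp: grid_edge_def grid_vert_def)
  have "(b = d \<and> (c = a + 1 \<or> a = c + 1)) \<or> (a = c \<and> (d = b + 1 \<or> b = d + 1))"
    using assms pq by (auto simp: grid_edge_def)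
  then show ?thesis
  proof (elim disjE conjE)
    assume "b = d" "c = a + 1"
    then show ?thesis using gv pq by (intro bexI[of _ "gH a b"]) (auto simp: GE_def)
  next
    assume "b = d" "a = c + 1"
    then show ?thesis using gv pq by (intro bexI[of _ "gH c d"]) (auto simp: GE_def)
  next
    assume "a = c" "d = b + 1"
    then show ?thesis using gv pq by (intro bexI[of _ "gV a b"]) (auto simp: GE_def)
  next
    assume "a = c" "b = d + 1"
    then show ?thesis using gv pq by (intro bexI[of _ "gV c d"]) (auto simp: GE_def)
  qed
qed

lemma GE1:
  assumes "cw_edge R (WallV p) (WallV q)"
  shows "\<exists>e\<in>GE (2*R) R. gends e = {p,q}"
proof -
  have "grid_edge R p q \<or> grid_edge R q p"
    using assms unfolding cw_edge_def cw_edge0_def wall_edge_def by auto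
  then show ?thesis using grid_adj[of R p q] grid_adj[of R q p] by (auto simp: insert_commute)
qed

lemma GE2:
  assumes "cw_edge R (NewV b t) u"
  shows "is_brick R b \<and> ((\<exists>t'. u = NewV b t') \<or> (\<exists>s\<in>Sb b. u = WallV s))"
  using assms unfolding cw_edge_def cw_edge0_def Sb_def by auto

lemma GE3:
  assumes b: "is_brick R b" and s: "s \<in> Sb b" "s' \<in> Sb b" "s \<noteq> s'"
  shows "\<exists>e\<in>GE (2*R) R. gends e = {s,s'}"
proof -
  obtain i j where bij: "b = (i,j)" by (cases b)
  have c: "1 \<le> i" "i + 2 \<le> 2*R" "1 \<le> j" "j < R" using b bij by (auto simp: is_brick_def)
  have e1: "gH (i+1) j \<in> GE (2*R) R" "gV (i+2) j \<in> GE (2*R) R" "gD (i+1) j \<in> GE (2*R) R"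
    using c by (auto simp: GE_def)
  have g: "gends (gH (i+1) j) = {(i+1,j),(i+2,j)}" "gends (gV (i+2) j) = {(i+2,j),(i+2,j+1)}"
     "gends (gD (i+1) j) = {(i+1,j),(i+2,j+1)}" by auto
  have S: "Sb b = {(i+1,j),(i+2,j),(i+2,j+1)}"
    by (simp add: Sb_def bij brick_x2_def brick_x3_def brick_omega_def)
  have "{s,s'} = {(i+1,j),(i+2,j)} \<or> {s,s'} = {(i+2,j),(i+2,j+1)} \<or> {s,s'} = {(i+1,j),(i+2,j+1)}"
    using s unfolding S by auto
  then show ?thesis
  proof (elim disjE)
    assume "{s,s'} = {(i+1,j),(i+2,j)}"
    then show ?thesis using e1(1) g(1) by (intro bexI[of _ "gH (i+1) j"]) simp_all
  next
    assume "{s,s'} = {(i+2,j),(i+2,j+1)}"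
    then show ?thesis using e1(2) g(2) by (intro bexI[of _ "gV (i+2) j"]) simp_all
  next
    assume "{s,s'} = {(i+1,j),(i+2,j+1)}"
    then show ?thesis using e1(3) g(3) by (intro bexI[of _ "gD (i+1) j"]) simp_all
  qed
qed

definition nb :: "nat \<times> nat \<Rightarrow> nat \<Rightarrow> cw_vertex set" where
  "nb b t = (if t = 0 then {WallV (brick_x2 b), NewV b 1, NewV b 2, WallV (brick_omega b)}
    else if t = 1 then {NewV b 0, NewV b 2, NewV b 3, WallV (brick_omega b)}
    else if t = 2 then {NewV b 1, NewV b 3, NewV b 0, WallV (brick_omega b)}
    else {NewV b 2, WallV (brick_x3 b), NewV b 1, WallV (brick_omega b)})"

lemma card4: "card {a, b, c, d} \<le> 4"
  by (simp add: card_insert_if)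

lemma card_nb: "card (nb b t) \<le> 4"
  unfolding nb_def by (simp only: card4 split: if_split) simp

lemma GE4:
  assumes "t < 4"
  shows "{u. cw_edge R (NewV b t) u} \<subseteq> nb b t"
proof
  fix u assume "u \<in> {u. cw_edge R (NewV b t) u}"
  then have "cw_edge0 R (NewV b t) u \<or> cw_edge0 R u (NewV b t)" by (simp add: cw_edge_def)
  then show "u \<in> nb b t"
    using assms unfolding cw_edge0_def nb_def by (auto simp: less_Suc_eq numeral_eq_Suc)
qed


definition tadj :: "nat \<Rightarrow> (nat \<times> nat) set \<Rightarrow> nat \<times> nat \<Rightarrow> nat \<times> nat \<Rightarrow> bool" where
  "tadj R S a c \<longleftrightarrow> a \<in> S \<and> c \<in> S \<and> (\<exists>e\<in>GE (2*R) R. gends e = {a,c})"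

lemma walk1:
  assumes w: "(\<lambda>a b. a \<in> S \<and> b \<in> S \<and> cw_edge R a b)\<^sup>*\<^sup>* (WallV x) u" and x: "WallV x \<in> S"
  shows "(\<forall>q. u = WallV q \<longrightarrow> (tadj R {p. WallV p \<in> S})\<^sup>*\<^sup>* x q) \<and>
         (\<forall>b t. u = NewV b t \<longrightarrow> (\<exists>s\<in>Sb b. WallV s \<in> S \<and> (tadj R {p. WallV p \<in> S})\<^sup>*\<^sup>* x s))"
  using w
proof (induction rule: rtranclp_induct)
  case base then show ?case by simp
next
  case (step y z)
  have yz: "y \<in> S" "z \<in> S" "cw_edge R y z" using step.hyps(2) by auto
  show ?case
  proof (cases y)
    case (WallV q)
    then have rq: "(tadj R {p. WallV p \<in> S})\<^sup>*\<^sup>* x q" using step.IH by simp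
    show ?thesis
    proof (cases z)
      case (WallV q')
      obtain e where "e \<in> GE (2*R) R" "gends e = {q,q'}" using GE1 yz(3) \<open>y = WallV q\<close> WallV by blast
      then have "tadj R {p. WallV p \<in> S} q q'" using yz \<open>y = WallV q\<close> WallV by (auto simp: tadj_def)
      then show ?thesis using rq WallV by (auto intro: rtranclp.rtrancl_into_rtrancl)
    next
      case (NewV b t)
      have "cw_edge R (NewV b t) (WallV q)" using yz(3) \<open>y = WallV q\<close> NewV cw_edge_sym by metis
      then have "q \<in> Sb b" using GE2 by blast
      then show ?thesis using rq NewV yz \<open>y = WallV q\<close> by auto
    qed
  next
    case (NewV b t)
    obtain s where s: "s \<in> Sb b" "WallV s \<in> S" "(tadj R {p. WallV p \<in> S})\<^sup>*\<^sup>* x s"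
      using step.IH NewV by blast
    have g2: "is_brick R b \<and> ((\<exists>t'. z = NewV b t') \<or> (\<exists>s\<in>Sb b. z = WallV s))"
      using GE2 yz(3) NewV by blast
    show ?thesis
    proof (cases z)
      case (WallV q)
      have q: "q \<in> Sb b" using g2 WallV by auto
      have "(tadj R {p. WallV p \<in> S})\<^sup>*\<^sup>* x q"
      proof (cases "s = q")
        case True then show ?thesis using s by simp
      next
        case False
        obtain e where "e \<in> GE (2*R) R" "gends e = {s,q}" using GE3[of R b s q] g2 s q False by blast
        then have "tadj R {p. WallV p \<in> S} s q" using s yz WallV by (auto simp: tadj_def)
        then show ?thesis using s by (auto intro: rtranclp.rtrancl_into_rtrancl)
      qed
      then show ?thesis using WallV by simp
    next
      case (NewV b' t')
      then have "b' = b" using g2 by auto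
      then show ?thesis using s NewV by auto
    qed
  qed
qed

lemma walk2:
  assumes w: "(\<lambda>a b. a \<in> S \<and> b \<in> S \<and> cw_edge R a b)\<^sup>*\<^sup>* (NewV b t) u" and no: "\<forall>s\<in>Sb b. WallV s \<notin> S"
  shows "\<exists>t'. u = NewV b t'"
  using w
proof (induction rule: rtranclp_induct)
  case base then show ?case by simp
next
  case (step y z)
  then obtain t' where y: "y = NewV b t'" by blast
  have "z \<in> S" "cw_edge R (NewV b t') z" using step.hyps(2) y by auto
  then show ?case using GE2 no by blast
qed

lemma NS0:
  assumes u: "NewV b t \<in> S" and c: "connected_set (cw_edge R) S" and ne: "{p. WallV p \<in> S} \<noteq> {}"
  shows "\<exists>s\<in>Sb b. WallV s \<in> S"
proof -
  obtain x where x: "WallV x \<in> S" using ne by auto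
  have "(\<lambda>a b. a \<in> S \<and> b \<in> S \<and> cw_edge R a b)\<^sup>*\<^sup>* (WallV x) (NewV b t)"
    using c x u by (auto simp: connected_set_def)
  then show ?thesis using walk1 x by blast
qed

lemma NS:
  assumes e: "cw_edge R (NewV b t) w" and w: "w \<in> S" and c: "connected_set (cw_edge R) S"
    and ne: "{p. WallV p \<in> S} \<noteq> {}"
  shows "\<exists>s\<in>Sb b. WallV s \<in> S"
proof -
  have "(\<exists>t'. w = NewV b t') \<or> (\<exists>s\<in>Sb b. w = WallV s)" using GE2[OF e] by blast
  then show ?thesis
  proof
    assume "\<exists>t'. w = NewV b t'"
    then show ?thesis using NS0 w c ne by blast
  qed (use w in auto)
qed

lemma wall_grid: "WallV p \<in> cw_vert R \<Longrightarrow> p \<in> {..2*R} \<times> {..R}"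
  by (cases p) (auto simp: cw_vert_def wall_vert_def grid_vert_def)

lemma newv_vert: "NewV b t \<in> cw_vert R \<Longrightarrow> is_brick R b \<and> t < 4"
  by (auto simp: cw_vert_def)


lemma tadj_eq: "tadj R S = (\<lambda>a b. a \<in> S \<and> b \<in> S \<and> (\<exists>e\<in>GE (2*R) R. gends e = {a,b}))"
  by (intro ext) (simp add: tadj_def)

lemma caseA:
  fixes \<phi> :: "nat \<Rightarrow> cw_vertex set"
  assumes sub: "\<forall>k<6. \<phi> k \<subseteq> cw_vert R" and con: "\<forall>k<6. connected_set (cw_edge R) (\<phi> k)"
    and dsj: "\<forall>k<6. \<forall>l<6. k \<noteq> l \<longrightarrow> \<phi> k \<inter> \<phi> l = {}"
    and adjc: "\<forall>k<6. \<forall>l<6. k \<noteq> l \<longrightarrow> (\<exists>a\<in>\<phi> k. \<exists>b\<in>\<phi> l. cw_edge R a b)"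
    and ne: "\<forall>k<6. {p. WallV p \<in> \<phi> k} \<noteq> {}"
  shows False
proof -
  define \<psi> where "\<psi> k = {p. WallV p \<in> \<phi> k}" for k
  have conn\<psi>: "(\<lambda>a b. a \<in> \<psi> i \<and> b \<in> \<psi> i \<and> (\<exists>e\<in>GE (2*R) R. gends e = {a,b}))\<^sup>*\<^sup>* x y"
    if i: "i < 6" and x: "x \<in> \<psi> i" and y: "y \<in> \<psi> i" for i x y
  proof -
    have "(\<lambda>a b. a \<in> \<phi> i \<and> b \<in> \<phi> i \<and> cw_edge R a b)\<^sup>*\<^sup>* (WallV x) (WallV y)"
      using con i x y by (auto simp: connected_set_def \<psi>_def)
    moreover have xw: "WallV x \<in> \<phi> i" using x by (simp add: \<psi>_def)
    ultimately have "(tadj R {p. WallV p \<in> \<phi> i})\<^sup>*\<^sup>* x y"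
      using walk1[of "\<phi> i" R x "WallV y"] by blast
    then show ?thesis by (simp add: tadj_eq \<psi>_def)
  qed
  have adj\<psi>: "\<exists>e\<in>GE (2*R) R. \<exists>a\<in>\<psi> i. \<exists>b\<in>\<psi> j. gends e = {a,b}"
    if ij: "i < 6" "j < 6" "i \<noteq> j" for i j
  proof -
    obtain a b where ab: "a \<in> \<phi> i" "b \<in> \<phi> j" "cw_edge R a b" using adjc ij by blast
    have dij: "\<phi> i \<inter> \<phi> j = {}" using dsj ij by blast
    show ?thesis
    proof (cases a)
      case (WallV q)
      show ?thesis
      proof (cases b)
        case (WallV q')
        obtain e where e: "e \<in> GE (2*R) R" "gends e = {q,q'}" using GE1[of R q q'] ab \<open>a = WallV q\<close> WallV by blast
        have "q \<in> \<psi> i" "q' \<in> \<psi> j" using ab \<open>a = WallV q\<close> WallV by (simp_all add: \<psi>_def)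
        then show ?thesis using e by blast
      next
        case (NewV bb t)
        have e: "cw_edge R (NewV bb t) (WallV q)" using ab WallV NewV cw_edge_sym by metis
        then have q: "q \<in> Sb bb" "is_brick R bb" using GE2 by blast+
        obtain s where s: "s \<in> Sb bb" "WallV s \<in> \<phi> j"
          using NS0[of bb t "\<phi> j" R] ab NewV con ne ij by blast
        have "s \<noteq> q" using s ab WallV dij by auto
        then obtain e where "e \<in> GE (2*R) R" "gends e = {q,s}" using GE3[of R bb q s] q s by blast
        moreover have "q \<in> \<psi> i" "s \<in> \<psi> j" using ab WallV s by (simp_all add: \<psi>_def)
        ultimately show ?thesis by blast
      qed
    next
      case (NewV bb t)
      have br: "is_brick R bb" using GE2 ab NewV by blast
      obtain s where s: "s \<in> Sb bb" "WallV s \<in> \<phi> i"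
        using NS0[of bb t "\<phi> i" R] ab NewV con ne ij by blast
      obtain s' where s': "s' \<in> Sb bb" "WallV s' \<in> \<phi> j"
        using NS[of R bb t b "\<phi> j"] ab NewV con ne ij by blast
      have "s \<noteq> s'" using s s' dij by auto
      then obtain e where "e \<in> GE (2*R) R" "gends e = {s,s'}" using GE3[of R bb s s'] br s s' by blast
      moreover have "s \<in> \<psi> i" "s' \<in> \<psi> j" using s s' by (simp_all add: \<psi>_def)
      ultimately show ?thesis by blast
    qed
  qed
  interpret pl "GE (2*R) R" gends "FF (2*R) R" "gs1 (2*R) R" "gs2 (2*R) R" \<psi>
  proof
    show "finite (GE (2*R) R)" by (rule finite_GE)
    show "finite (FF (2*R) R)" by (rule finite_FF)
    show "card (gends e) = 2" for e by (cases e) auto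
    show "gs1 (2*R) R e \<in> FF (2*R) R \<and> gs2 (2*R) R e \<in> FF (2*R) R" for e by (simp add: s_in_FF)
    show "even (card {e \<in> {e\<in>GE (2*R) R. (gs1 (2*R) R e \<in> I) \<noteq> (gs2 (2*R) R e \<in> I)}. v \<in> gends e})" for I v
      using bd_even[of "2*R" R I v] by (simp add: bdg_def)
    show "\<exists>I\<subseteq>FF (2*R) R. {e\<in>GE (2*R) R. (gs1 (2*R) R e \<in> I) \<noteq> (gs2 (2*R) R e \<in> I)} = Z"
      if "Z \<subseteq> GE (2*R) R" "\<forall>v. even (card {e\<in>Z. v \<in> gends e})" for Z
      using gen_grid[OF that] by (simp add: bdg_def)
    show "finite (\<psi> i)" if "i < 6" for i
    proof -
      have "\<psi> i \<subseteq> {..2*R} \<times> {..R}"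
      proof
        fix p assume "p \<in> \<psi> i"
        then have "WallV p \<in> cw_vert R" using sub that by (auto simp: \<psi>_def)
        then show "p \<in> {..2*R} \<times> {..R}" by (rule wall_grid)
      qed
      then show ?thesis by (rule finite_subset) auto
    qed
    show "\<psi> i \<noteq> {}" if "i < 6" for i using ne that by (simp add: \<psi>_def)
    show "(\<lambda>a b. a \<in> \<psi> i \<and> b \<in> \<psi> i \<and> (\<exists>e\<in>GE (2*R) R. gends e = {a,b}))\<^sup>*\<^sup>* x y"
      if "i < 6" "x \<in> \<psi> i" "y \<in> \<psi> i" for i x y using conn\<psi> that by blast
    show "\<psi> i \<inter> \<psi> j = {}" if "i < 6" "j < 6" "i \<noteq> j" for i j
      using dsj that by (auto simp: \<psi>_def)
    show "\<exists>e\<in>GE (2*R) R. \<exists>a\<in>\<psi> i. \<exists>b\<in>\<psi> j. gends e = {a,b}" if "i < 6" "j < 6" "i \<noteq> j" for i j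
      using adj\<psi> that by blast
  qed
  show False by (rule pl_False)
qed


lemma inXb:
  assumes u: "NewV b t \<in> S" and c: "connected_set (cw_edge R) S" and sub: "S \<subseteq> cw_vert R"
    and no: "\<forall>s\<in>Sb b. WallV s \<notin> S"
  shows "S \<subseteq> (\<lambda>t. NewV b t) ` {..<4}"
proof
  fix v assume v: "v \<in> S"
  have "(\<lambda>a b. a \<in> S \<and> b \<in> S \<and> cw_edge R a b)\<^sup>*\<^sup>* (NewV b t) v"
    using c u v by (auto simp: connected_set_def)
  then obtain t' where t': "v = NewV b t'" using walk2 no by blast
  then have "t' < 4" using newv_vert v sub by blast
  then show "v \<in> (\<lambda>t. NewV b t) ` {..<4}" using t' by auto
qed

lemma caseB:
  fixes \<phi> :: "nat \<Rightarrow> cw_vertex set"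
  assumes sub: "\<forall>k<6. \<phi> k \<subseteq> cw_vert R" and con: "\<forall>k<6. connected_set (cw_edge R) (\<phi> k)"
    and dsj: "\<forall>k<6. \<forall>l<6. k \<noteq> l \<longrightarrow> \<phi> k \<inter> \<phi> l = {}"
    and adjc: "\<forall>k<6. \<forall>l<6. k \<noteq> l \<longrightarrow> (\<exists>a\<in>\<phi> k. \<exists>b\<in>\<phi> l. cw_edge R a b)"
    and k: "k < 6" "{p. WallV p \<in> \<phi> k} = {}"
  shows False
proof -
  have "\<phi> k \<noteq> {}" using con k by (simp add: connected_set_def)
  then obtain u0 where u0: "u0 \<in> \<phi> k" by blast
  obtain b t0 where bt: "u0 = NewV b t0" using u0 k by (cases u0) auto
  have br: "is_brick R b" using newv_vert u0 bt sub k by blast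
  define Xb where "Xb = (\<lambda>t. NewV b t) ` {..<(4::nat)}"
  have finXb: "finite Xb" by (simp add: Xb_def)
  have cXb: "card Xb \<le> 4" unfolding Xb_def using card_image_le[of "{..<(4::nat)}" "\<lambda>t. NewV b t"] by simp
  have noS: "\<forall>s\<in>Sb b. WallV s \<notin> \<phi> k" using k by auto
  have kX: "\<phi> k \<subseteq> Xb" unfolding Xb_def using inXb[of b t0 "\<phi> k" R] u0 bt con sub noS k by blast
  have dich: "\<phi> l \<subseteq> Xb \<or> (\<exists>s\<in>Sb b. WallV s \<in> \<phi> l)" if l: "l < 6" for l
  proof (cases "l = k")
    case True then show ?thesis using kX by simp
  next
    case False
    obtain a c where ac: "a \<in> \<phi> k" "c \<in> \<phi> l" "cw_edge R a c" using adjc k l False by blast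
    obtain ta where ta: "a = NewV b ta" using ac kX by (auto simp: Xb_def)
    have "(\<exists>t'. c = NewV b t') \<or> (\<exists>s\<in>Sb b. c = WallV s)" using GE2 ac ta by blast
    then show ?thesis
    proof
      assume "\<exists>t'. c = NewV b t'"
      then obtain tc where tc: "c = NewV b tc" by blast
      show ?thesis
      proof (cases "\<exists>s\<in>Sb b. WallV s \<in> \<phi> l")
        case True then show ?thesis by simp
      next
        case False
        then have "\<phi> l \<subseteq> Xb" unfolding Xb_def using inXb[of b tc "\<phi> l" R] ac tc con sub l by blast
        then show ?thesis by simp
      qed
    qed (use ac in auto)
  qed
  define Aset where "Aset = {l\<in>{..<(6::nat)}. \<phi> l \<subseteq> Xb}"
  define Bset where "Bset = {l\<in>{..<(6::nat)}. \<exists>s\<in>Sb b. WallV s \<in> \<phi> l}"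
  have AB: "{..<(6::nat)} = Aset \<union> Bset" using dich by (auto simp: Aset_def Bset_def)
  define g where "g l = (SOME s. s \<in> Sb b \<and> WallV s \<in> \<phi> l)" for l
  have g: "g l \<in> Sb b \<and> WallV (g l) \<in> \<phi> l" if "l \<in> Bset" for l
    using that unfolding g_def Bset_def by (metis (mono_tags, lifting) mem_Collect_eq someI_ex)
  have "inj_on g Bset"
  proof (rule inj_onI)
    fix l l' assume "l \<in> Bset" "l' \<in> Bset" "g l = g l'"
    moreover have "WallV (g l) \<in> \<phi> l" "WallV (g l') \<in> \<phi> l'" using g \<open>l \<in> Bset\<close> \<open>l' \<in> Bset\<close> by auto
    ultimately have "WallV (g l) \<in> \<phi> l \<inter> \<phi> l'" by simp
    then show "l = l'" using dsj \<open>l \<in> Bset\<close> \<open>l' \<in> Bset\<close> by (auto simp: Bset_def)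
  qed
  moreover have "g ` Bset \<subseteq> Sb b" using g by auto
  moreover have "card (Sb b) \<le> 3" unfolding Sb_def by (simp add: card_insert_if)
  ultimately have cB: "card Bset \<le> 3"
    by (metis card_inj_on_le finite.emptyI finite.insertI Sb_def le_trans)
  have "card (Aset \<union> Bset) = 6" unfolding AB[symmetric] by simp
  then have "6 \<le> card Aset + card Bset" using card_Un_le[of Aset Bset] by linarith
  then have cA: "3 \<le> card Aset" using cB by simp
  have finA: "finite Aset" by (simp add: Aset_def)
  show False
  proof (cases "\<exists>l\<in>Aset. card (\<phi> l) = 1")
    case True
    then obtain l where l: "l \<in> Aset" "card (\<phi> l) = 1" by blast
    then obtain v where v: "\<phi> l = {v}" by (metis card_1_singletonE)
    have l6: "l < 6" using l by (simp add: Aset_def)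
    obtain t1 where t1: "v = NewV b t1" "t1 < 4" using l v by (auto simp: Aset_def Xb_def)
    define M where "M = {..<(6::nat)} - {l}"
    define h where "h m = (SOME c. c \<in> \<phi> m \<and> cw_edge R (NewV b t1) c)" for m
    have h: "h m \<in> \<phi> m \<and> cw_edge R (NewV b t1) (h m)" if "m \<in> M" for m
    proof -
      have "m < 6" "m \<noteq> l" using that by (auto simp: M_def)
      then obtain a c where "a \<in> \<phi> l" "c \<in> \<phi> m" "cw_edge R a c" using adjc l6 by blast
      then have "\<exists>c. c \<in> \<phi> m \<and> cw_edge R (NewV b t1) c" using v t1 by auto
      then show ?thesis unfolding h_def by (rule someI_ex)
    qed
    have "inj_on h M"
    proof (rule inj_onI)
      fix m m' assume "m \<in> M" "m' \<in> M" "h m = h m'"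
      moreover have "h m \<in> \<phi> m" "h m' \<in> \<phi> m'" using h \<open>m \<in> M\<close> \<open>m' \<in> M\<close> by auto
      ultimately have "h m \<in> \<phi> m \<inter> \<phi> m'" by simp
      then show "m = m'" using dsj \<open>m \<in> M\<close> \<open>m' \<in> M\<close> by (auto simp: M_def)
    qed
    moreover have "h ` M \<subseteq> nb b t1" using h GE4[OF t1(2), of R b] by auto
    moreover have "finite (nb b t1)" by (simp add: nb_def)
    ultimately have "card M \<le> card (nb b t1)" by (metis card_inj_on_le)
    moreover have "card M = 5" using l6 by (simp add: M_def)
    ultimately show False using card_nb[of b t1] by simp
  next
    case False
    have c2: "2 \<le> card (\<phi> l)" if "l \<in> Aset" for l
    proof -
      have "\<phi> l \<subseteq> Xb" "l < 6" using that by (auto simp: Aset_def)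
      then have "finite (\<phi> l)" "\<phi> l \<noteq> {}" using finXb finite_subset con by (auto simp: connected_set_def)
      then have "card (\<phi> l) \<noteq> 0" by simp
      then show ?thesis using False that by fastforce
    qed
    have "card (\<Union>l\<in>Aset. \<phi> l) = (\<Sum>l\<in>Aset. card (\<phi> l))"
    proof (rule card_UN_disjoint[OF finA])
      show "\<forall>l\<in>Aset. finite (\<phi> l)" using finXb finite_subset by (auto simp: Aset_def)
      show "\<forall>l\<in>Aset. \<forall>l'\<in>Aset. l \<noteq> l' \<longrightarrow> \<phi> l \<inter> \<phi> l' = {}" using dsj by (auto simp: Aset_def)
    qed
    moreover have "(\<Sum>l\<in>Aset. 2) \<le> (\<Sum>l\<in>Aset. card (\<phi> l))" by (rule sum_mono) (rule c2)
    moreover have "card (\<Union>l\<in>Aset. \<phi> l) \<le> card Xb" using finXb by (intro card_mono) (auto simp: Aset_def)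
    ultimately show False using cA cXb by simp
  qed
qed

theorem mainTheorem8:
  fixes R :: nat
  assumes "R \<ge> 2"
  shows "\<not> is_minor (K_verts 6) K_edge (cw_vert R) (cw_edge R)"
proof
  assume "is_minor (K_verts 6) K_edge (cw_vert R) (cw_edge R)"
  then obtain \<phi> :: "nat \<Rightarrow> cw_vertex set" where
    m1: "\<forall>x\<in>{0..<6}. \<phi> x \<subseteq> cw_vert R \<and> connected_set (cw_edge R) (\<phi> x)" and
    m2: "\<forall>x\<in>{0..<6}. \<forall>y\<in>{0..<6}. x \<noteq> y \<longrightarrow> \<phi> x \<inter> \<phi> y = {}" and
    m3: "\<forall>x\<in>{0..<6}. \<forall>y\<in>{0..<6}. K_edge x y \<longrightarrow> (\<exists>a\<in>\<phi> x. \<exists>b\<in>\<phi> y. cw_edge R a b)"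
    unfolding is_minor_def K_verts_def by blast
  have sub: "\<forall>k<6. \<phi> k \<subseteq> cw_vert R" using m1 by auto
  have con: "\<forall>k<6. connected_set (cw_edge R) (\<phi> k)" using m1 by auto
  have dsj: "\<forall>k<6. \<forall>l<6. k \<noteq> l \<longrightarrow> \<phi> k \<inter> \<phi> l = {}" using m2 by auto
  have adjc: "\<forall>k<6. \<forall>l<6. k \<noteq> l \<longrightarrow> (\<exists>a\<in>\<phi> k. \<exists>b\<in>\<phi> l. cw_edge R a b)" using m3 by (auto simp: K_edge_def)
  show False
  proof (cases "\<forall>k<6. {p. WallV p \<in> \<phi> k} \<noteq> {}")
    case True then show False using caseA[OF sub con dsj adjc] by blast
  next
    case False
    then obtain k where "k < 6" "{p. WallV p \<in> \<phi> k} = {}" by blast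
    then show False using caseB[OF sub con dsj adjc] by blast
  qed
qed


end
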